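(* Fix $\alpha,\beta\in(0,1)$ and consider the decoupled process with parameters $(G,r,T,\alpha,\beta)$. For $t\in\mathbb{N}$ let $u,v$ be chosen uniformly and independently from $B_{t,G}(r)$, independently of the process, and let $p_t=\Pr[\mathrm{origin}_t(u)=\mathrm{origin}_t(v)]$ (probability over both the process and the choice of $u,v$). Let $\lambda(t)=\dfrac{|\{x:g_t(x)=+1\}|-|\{x:g_t(x)=-1\}|}{|B_{t,G}(r)|}$. If $p_t\to0$ as $t\to\infty$, then for every $\eta>0$ there is $t_0$ such that $\Pr[|\lambda(t)-\mathbb{E}\lambda(t)|>\eta]<\eta$ for all $t\ge t_0$. Moreover, if $p_t\le e^{-c_1t^{c_2}}$ for constants $c_1,c_2>0$, then there are constants $c_3,c_4,c_5,c_6>0$ with $\Pr[|\lambda(t)-\mathbb{E}\lambda(t)|>e^{-c_3t^{c_4}}]\le e^{-c_5t^{c_6}}$ for all sufficiently large $t$.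
   Context: Decoupled process. Fix $\alpha,\beta\in[0,1]$, a connected locally finite undirected graph $G$, root $r$, and a BFS spanning tree $T$ of $G$ rooted at $r$, oriented away from $r$, with parent map $p$. Let $Z_0=+1$, $Z_1,Z_2,\dots$ i.i.d. uniform on $\{-1,+1\}$, $Z_\infty=\bot$. Counter $\mathrm{count}_0=1$; $\mathrm{origin}_0(r)=0$ (and always $0$), $\mathrm{origin}_0(v)=\infty$ for $v\ne r$; $g_t(v)=Z_{\mathrm{origin}_t(v)}$. Update from $t$ to $t+1$ (independent choices): if $g_t(v)=g_t(p(v))=\bot$ then $\mathrm{origin}_{t+1}(v)=\infty$; nodes with $g_t(v)=\bot\ne g_t(p(v))$ are processed sequentially in a fixed order: w.p. $1-\alpha$, $\mathrm{origin}_{t+1}(v)=\mathrm{origin}_t(p(v))$; w.p. $\alpha$, $\mathrm{origin}_{t+1}(v)$ is the current counter value and the counter is then incremented; if $g_t(v)\ne\bot$, $v\ne r$: w.p. $\beta$, $\mathrm{origin}_{t+1}(v)=\mathrm{origin}_t(p(v))$, otherwise unchanged. $B_{t,G}(r)=\{x:d_G(r,x)\le t\}$; this is exactly the set of nodes with $g_t(x)\ne\bot$. *)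

theory Defs
  imports "HOL-Probability.Probability"
begin

text \<open>Graph distance d_G(x,y): length of a shortest walk (connectedness is assumed separately).\<close>
definition gdist :: "('a \<Rightarrow> 'a \<Rightarrow> bool) \<Rightarrow> 'a \<Rightarrow> 'a \<Rightarrow> nat" where
  "gdist E x y = (LEAST n. (E ^^ n) x y)"

definition gball :: "('a \<Rightarrow> 'a \<Rightarrow> bool) \<Rightarrow> 'a \<Rightarrow> nat \<Rightarrow> 'a set" where
  "gball E r t = {x. gdist E r x \<le> t}"

definition conn_lf_graph :: "('a \<Rightarrow> 'a \<Rightarrow> bool) \<Rightarrow> bool" where
  "conn_lf_graph E \<longleftrightarrow> (\<forall>x y. E x y \<longrightarrow> E y x) \<and> (\<forall>x. finite {y. E x y})
     \<and> (\<forall>x y. E\<^sup>*\<^sup>* x y)"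

text \<open>Parent map p of a BFS spanning tree of G rooted at r: every non-root vertex is joined
  by an edge of G to its parent, which is one step closer to r.\<close>
definition bfs_parent :: "('a \<Rightarrow> 'a \<Rightarrow> bool) \<Rightarrow> 'a \<Rightarrow> ('a \<Rightarrow> 'a) \<Rightarrow> bool" where
  "bfs_parent E r p \<longleftrightarrow>
     (\<forall>v. v \<noteq> r \<longrightarrow> E (p v) v \<and> gdist E r v = Suc (gdist E r (p v)))"

text \<open>State: (origin, counter, Z).  origin v = None encodes origin = \<infinity>.
  The signs Z_k (k \<ge> 1) are sampled (uniform on {-1,+1}, independently) at the moment the index k
  is allocated by the counter; Z_0 = +1.  Entries of Z at indices not yet allocated are never
  referenced.\<close>
type_synonym 'a dstate = "('a \<Rightarrow> nat option) \<times> nat \<times> (nat \<Rightarrow> int)"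

definition dorigin :: "'a dstate \<Rightarrow> 'a \<Rightarrow> nat option" where
  "dorigin s = fst s"

text \<open>g_t(v) = Z_{origin_t(v)}, with None encoding \<bottom>.\<close>
definition dg :: "'a dstate \<Rightarrow> 'a \<Rightarrow> int option" where
  "dg s v = map_option (snd (snd s)) (fst s v)"

definition sign_pmf :: "int pmf" where
  "sign_pmf = pmf_of_set {-1, 1}"

text \<open>Processing one node v with g_t(v) = \<bottom> \<noteq> g_t(p v); og is the origin map at time t.\<close>
definition new_node :: "real \<Rightarrow> ('a \<Rightarrow> 'a) \<Rightarrow> ('a \<Rightarrow> nat option) \<Rightarrow> 'a \<Rightarrow> 'a dstate \<Rightarrow> 'a dstate pmf" where
  "new_node \<alpha> p og v s = (case s of (og', c, Z) \<Rightarrow>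
     bind_pmf (bernoulli_pmf \<alpha>) (\<lambda>b. if b
        then bind_pmf sign_pmf (\<lambda>z. return_pmf (og'(v := Some c), Suc c, Z(c := z)))
        else return_pmf (og'(v := og (p v)), c, Z)))"

fun seq_new :: "real \<Rightarrow> ('a \<Rightarrow> 'a) \<Rightarrow> ('a \<Rightarrow> nat option) \<Rightarrow> 'a list \<Rightarrow> 'a dstate \<Rightarrow> 'a dstate pmf" where
  "seq_new \<alpha> p og [] s = return_pmf s"
| "seq_new \<alpha> p og (v # vs) s = bind_pmf (new_node \<alpha> p og v s) (seq_new \<alpha> p og vs)"

text \<open>Processing one node v \<noteq> r with g_t(v) \<noteq> \<bottom>.\<close>
definition old_node :: "real \<Rightarrow> ('a \<Rightarrow> 'a) \<Rightarrow> ('a \<Rightarrow> nat option) \<Rightarrow> 'a \<Rightarrow> 'a dstate \<Rightarrow> 'a dstate pmf" where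
  "old_node \<beta> p og v s = (case s of (og', c, Z) \<Rightarrow>
     bind_pmf (bernoulli_pmf \<beta>) (\<lambda>b. return_pmf (if b then og'(v := og (p v)) else og', c, Z)))"

fun seq_old :: "real \<Rightarrow> ('a \<Rightarrow> 'a) \<Rightarrow> ('a \<Rightarrow> nat option) \<Rightarrow> 'a list \<Rightarrow> 'a dstate \<Rightarrow> 'a dstate pmf" where
  "seq_old \<beta> p og [] s = return_pmf s"
| "seq_old \<beta> p og (v # vs) s = bind_pmf (old_node \<beta> p og v s) (seq_old \<beta> p og vs)"

text \<open>One step t \<rightarrow> t+1.  The fixed processing order of the new nodes is the order of the
  vertex type.  Nodes with g_t(v) = g_t(p v) = \<bottom> keep origin \<infinity>; the root keeps origin 0.\<close>
definition dstep :: "real \<Rightarrow> real \<Rightarrow> ('a::linorder \<Rightarrow> 'a) \<Rightarrow> 'a \<Rightarrow> 'a dstate \<Rightarrow> 'a dstate pmf" where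
  "dstep \<alpha> \<beta> p r s = (case s of (og, c, Z) \<Rightarrow>
     bind_pmf (seq_new \<alpha> p og (sorted_list_of_set {v. og v = None \<and> og (p v) \<noteq> None}) (og, c, Z))
       (seq_old \<beta> p og (sorted_list_of_set {v. og v \<noteq> None \<and> v \<noteq> r})))"

definition dinit :: "'a \<Rightarrow> 'a dstate" where
  "dinit r = ((\<lambda>v. if v = r then Some 0 else None), 1, (\<lambda>_. 1))"

primrec dproc :: "real \<Rightarrow> real \<Rightarrow> ('a::linorder \<Rightarrow> 'a) \<Rightarrow> 'a \<Rightarrow> nat \<Rightarrow> 'a dstate pmf" where
  "dproc \<alpha> \<beta> p r 0 = return_pmf (dinit r)"
| "dproc \<alpha> \<beta> p r (Suc t) = bind_pmf (dproc \<alpha> \<beta> p r t) (dstep \<alpha> \<beta> p r)"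

definition coalesce_prob :: "('a \<Rightarrow> 'a \<Rightarrow> bool) \<Rightarrow> 'a::linorder \<Rightarrow> ('a \<Rightarrow> 'a) \<Rightarrow> real \<Rightarrow> real \<Rightarrow> nat \<Rightarrow> real" where
  "coalesce_prob E r p \<alpha> \<beta> t =
     measure_pmf.prob
       (pair_pmf (dproc \<alpha> \<beta> p r t) (pair_pmf (pmf_of_set (gball E r t)) (pmf_of_set (gball E r t))))
       {(s, u, v). dorigin s u = dorigin s v}"

definition dlambda :: "('a \<Rightarrow> 'a \<Rightarrow> bool) \<Rightarrow> 'a \<Rightarrow> nat \<Rightarrow> 'a dstate \<Rightarrow> real" where
  "dlambda E r t s = (real (card {x. dg s x = Some 1}) - real (card {x. dg s x = Some (-1)}))
                      / real (card (gball E r t))"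

end

theory Submission
  imports Defs
begin


definition flipk :: "nat \<Rightarrow> 'a dstate \<Rightarrow> 'a dstate" where
  "flipk k s = (case s of (og, c, Z) \<Rightarrow> if k < c then (og, c, Z(k := - Z k)) else s)"

lemma sign_neg: "map_pmf uminus sign_pmf = sign_pmf"
  unfolding sign_pmf_def
  by (subst map_pmf_of_set_inj) (auto simp: inj_on_def insert_commute)

lemma new_flip: "map_pmf (flipk k) (new_node \<alpha> p og v s) = new_node \<alpha> p og v (flipk k s)"
proof -
  obtain og' c Z where s: "s = (og', c, Z)" by (cases s) auto
  consider "k < c" | "k = c" | "c < k" by linarith
  then show ?thesis
  proof cases
    case 1
    then show ?thesis unfolding s new_node_def flipk_def
      by (auto simp: map_bind_pmf fun_upd_twist intro!: bind_pmf_cong)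
  next
    case 2
    have "bind_pmf sign_pmf (\<lambda>z. return_pmf (flipk k (og'(v := Some c), Suc c, Z(c := z))))
       = bind_pmf (map_pmf uminus sign_pmf) (\<lambda>z. return_pmf (og'(v := Some c), Suc c, Z(c := z)))"
      unfolding bind_map_pmf using 2 by (simp add: flipk_def)
    then have "bind_pmf sign_pmf (\<lambda>z. return_pmf (flipk k (og'(v := Some c), Suc c, Z(c := z))))
       = bind_pmf sign_pmf (\<lambda>z. return_pmf (og'(v := Some c), Suc c, Z(c := z)))"
      by (simp add: sign_neg)
    then show ?thesis unfolding s new_node_def using 2
      by (auto simp: map_bind_pmf flipk_def intro!: bind_pmf_cong)
  next
    case 3
    then show ?thesis unfolding s new_node_def flipk_def
      by (auto simp: map_bind_pmf intro!: bind_pmf_cong)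
  qed
qed

lemma old_flip: "map_pmf (flipk k) (old_node \<beta> p og v s) = old_node \<beta> p og v (flipk k s)"
proof -
  obtain og' c Z where s: "s = (og', c, Z)" by (cases s) auto
  show ?thesis unfolding s old_node_def flipk_def
      by (auto simp: map_bind_pmf intro!: bind_pmf_cong)
qed

lemma seq_new_flip: "map_pmf (flipk k) (seq_new \<alpha> p og L s) = seq_new \<alpha> p og L (flipk k s)"
proof (induction L arbitrary: s)
  case Nil then show ?case by simp
next
  case (Cons v L)
  have "map_pmf (flipk k) (seq_new \<alpha> p og (v # L) s)
      = bind_pmf (new_node \<alpha> p og v s) (\<lambda>x. seq_new \<alpha> p og L (flipk k x))"
    by (simp add: map_bind_pmf Cons.IH)
  also have "\<dots> = bind_pmf (map_pmf (flipk k) (new_node \<alpha> p og v s)) (seq_new \<alpha> p og L)"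
    by (simp add: bind_map_pmf)
  also have "\<dots> = seq_new \<alpha> p og (v # L) (flipk k s)" by (simp add: new_flip)
  finally show ?case .
qed

lemma seq_old_flip: "map_pmf (flipk k) (seq_old \<beta> p og L s) = seq_old \<beta> p og L (flipk k s)"
proof (induction L arbitrary: s)
  case Nil then show ?case by simp
next
  case (Cons v L)
  have "map_pmf (flipk k) (seq_old \<beta> p og (v # L) s)
      = bind_pmf (old_node \<beta> p og v s) (\<lambda>x. seq_old \<beta> p og L (flipk k x))"
    by (simp add: map_bind_pmf Cons.IH)
  also have "\<dots> = bind_pmf (map_pmf (flipk k) (old_node \<beta> p og v s)) (seq_old \<beta> p og L)"
    by (simp add: bind_map_pmf)
  also have "\<dots> = seq_old \<beta> p og (v # L) (flipk k s)" by (simp add: old_flip)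
  finally show ?case .
qed

lemma flipk_fst[simp]: "fst (flipk k s) = fst s"
  by (auto simp: flipk_def split: prod.splits)

lemma dstep_flip: "map_pmf (flipk k) (dstep \<alpha> \<beta> p r s) = dstep \<alpha> \<beta> p r (flipk k s)"
proof -
  obtain og c Z where s: "s = (og, c, Z)" by (cases s) auto
  obtain c' Z' where fs: "flipk k s = (og, c', Z')"
    unfolding s flipk_def by (cases "k < c") auto
  have "map_pmf (flipk k) (dstep \<alpha> \<beta> p r s) =
     bind_pmf (seq_new \<alpha> p og (sorted_list_of_set {v. og v = None \<and> og (p v) \<noteq> None}) (og, c, Z))
       (\<lambda>x. seq_old \<beta> p og (sorted_list_of_set {v. og v \<noteq> None \<and> v \<noteq> r}) (flipk k x))"
    unfolding s dstep_def by (simp add: map_bind_pmf seq_old_flip)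
  also have "\<dots> = bind_pmf (map_pmf (flipk k) (seq_new \<alpha> p og (sorted_list_of_set {v. og v = None \<and> og (p v) \<noteq> None}) (og, c, Z)))
       (seq_old \<beta> p og (sorted_list_of_set {v. og v \<noteq> None \<and> v \<noteq> r}))"
    by (simp add: bind_map_pmf)
  also have "\<dots> = dstep \<alpha> \<beta> p r (flipk k s)"
    unfolding seq_new_flip dstep_def fs by (simp add: s[symmetric] fs)
  finally show ?thesis .
qed

lemma dproc_flip: "k \<ge> 1 \<Longrightarrow> map_pmf (flipk k) (dproc \<alpha> \<beta> p r t) = dproc \<alpha> \<beta> p r t"
proof (induction t)
  case 0 then show ?case by (simp add: flipk_def dinit_def)
next
  case (Suc t)
  have "map_pmf (flipk k) (dproc \<alpha> \<beta> p r (Suc t)) = bind_pmf (dproc \<alpha> \<beta> p r t) (\<lambda>s. dstep \<alpha> \<beta> p r (flipk k s))"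
    by (simp add: map_bind_pmf dstep_flip)
  also have "\<dots> = bind_pmf (map_pmf (flipk k) (dproc \<alpha> \<beta> p r t)) (dstep \<alpha> \<beta> p r)"
    by (simp add: bind_map_pmf)
  finally show ?case using Suc by simp
qed



lemma set_sorted_sub: "set (sorted_list_of_set A) \<subseteq> A"
  by (cases "finite A") auto

lemma seq_new_inv:
  assumes "\<And>v s s'. v \<in> set L \<Longrightarrow> P s \<Longrightarrow> s' \<in> set_pmf (new_node \<alpha> p og v s) \<Longrightarrow> P s'"
  shows "P s \<Longrightarrow> s' \<in> set_pmf (seq_new \<alpha> p og L s) \<Longrightarrow> P s'"
  using assms
proof (induction L arbitrary: s)
  case Nil then show ?case by simp
next
  case (Cons v L)
  from Cons.prems(2) obtain s1 where s1: "s1 \<in> set_pmf (new_node \<alpha> p og v s)"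
    and s': "s' \<in> set_pmf (seq_new \<alpha> p og L s1)" by auto
  have "P s1" using Cons.prems(3)[of v s s1] Cons.prems(1) s1 by simp
  have step': "\<And>v s s'. v \<in> set L \<Longrightarrow> P s \<Longrightarrow> s' \<in> set_pmf (new_node \<alpha> p og v s) \<Longrightarrow> P s'"
    using Cons.prems(3) by (meson list.set_intros(2))
  show ?case using Cons.IH[OF \<open>P s1\<close> s' step'] .
qed

lemma seq_old_inv:
  assumes "\<And>v s s'. v \<in> set L \<Longrightarrow> P s \<Longrightarrow> s' \<in> set_pmf (old_node \<beta> p og v s) \<Longrightarrow> P s'"
  shows "P s \<Longrightarrow> s' \<in> set_pmf (seq_old \<beta> p og L s) \<Longrightarrow> P s'"
  using assms
proof (induction L arbitrary: s)
  case Nil then show ?case by simp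
next
  case (Cons v L)
  from Cons.prems(2) obtain s1 where s1: "s1 \<in> set_pmf (old_node \<beta> p og v s)"
    and s': "s' \<in> set_pmf (seq_old \<beta> p og L s1)" by auto
  have "P s1" using Cons.prems(3)[of v s s1] Cons.prems(1) s1 by simp
  have step': "\<And>v s s'. v \<in> set L \<Longrightarrow> P s \<Longrightarrow> s' \<in> set_pmf (old_node \<beta> p og v s) \<Longrightarrow> P s'"
    using Cons.prems(3) by (meson list.set_intros(2))
  show ?case using Cons.IH[OF \<open>P s1\<close> s' step'] .
qed

lemma finite_new: "finite (set_pmf (new_node \<alpha> p og v s))"
proof -
  obtain og' c Z where s: "s = (og', c, Z)" by (cases s) auto
  have "finite (set_pmf (bernoulli_pmf \<alpha>))" by (rule finite_subset[of _ UNIV]) auto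
  moreover have "finite (set_pmf sign_pmf)" by (simp add: sign_pmf_def)
  ultimately show ?thesis unfolding s new_node_def by auto
qed

lemma finite_old: "finite (set_pmf (old_node \<beta> p og v s))"
proof -
  obtain og' c Z where s: "s = (og', c, Z)" by (cases s) auto
  have "finite (set_pmf (bernoulli_pmf \<beta>))" by (rule finite_subset[of _ UNIV]) auto
  then show ?thesis unfolding s old_node_def by auto
qed

lemma finite_seq_new: "finite (set_pmf (seq_new \<alpha> p og L s))"
  by (induction L arbitrary: s) (auto simp: finite_new)

lemma finite_seq_old: "finite (set_pmf (seq_old \<beta> p og L s))"
  by (induction L arbitrary: s) (auto simp: finite_old)

lemma finite_dstep: "finite (set_pmf (dstep \<alpha> \<beta> p r s))"
  unfolding dstep_def by (auto simp: finite_seq_new finite_seq_old split: prod.splits)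

lemma finite_dproc: "finite (set_pmf (dproc \<alpha> \<beta> p r t))"
  by (induction t) (auto simp: finite_dstep)

definition dinv :: "('a \<Rightarrow> 'a \<Rightarrow> bool) \<Rightarrow> 'a \<Rightarrow> ('a \<Rightarrow> 'a) \<Rightarrow> nat \<Rightarrow> 'a dstate \<Rightarrow> bool" where
  "dinv E r p t s \<longleftrightarrow> (\<forall>x. fst s x \<noteq> None \<longrightarrow> gdist E r x \<le> t)
     \<and> (\<forall>x a. fst s x = Some a \<longrightarrow> a < fst (snd s))
     \<and> (\<forall>x. fst s x \<noteq> None \<and> x \<noteq> r \<longrightarrow> fst s (p x) \<noteq> None)"

definition J :: "('a \<Rightarrow> 'a) \<Rightarrow> ('a \<Rightarrow> nat option) \<Rightarrow> nat \<Rightarrow> 'a dstate \<Rightarrow> bool" where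
  "J p og c0 s \<longleftrightarrow> c0 \<le> fst (snd s) \<and> (\<forall>x a. fst s x = Some a \<longrightarrow> a < fst (snd s))
     \<and> (\<forall>x. og x \<noteq> None \<longrightarrow> fst s x \<noteq> None)
     \<and> (\<forall>x. fst s x \<noteq> None \<longrightarrow> og x \<noteq> None \<or> og (p x) \<noteq> None)"

lemma gdist_self: "gdist E r r = 0"
  unfolding gdist_def by (rule Least_eq_0) simp

lemma dinv_step:
  assumes bfs: "bfs_parent E r p" and inv: "dinv E r p t s"
    and s': "s' \<in> set_pmf (dstep \<alpha> \<beta> p r s)"
  shows "dinv E r p (Suc t) s'"
proof -
  obtain og c Z where s: "s = (og, c, Z)" by (cases s) auto
  note inv' = inv[unfolded dinv_def s, simplified]
  let ?L1 = "sorted_list_of_set {v. og v = None \<and> og (p v) \<noteq> None}"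
  let ?L2 = "sorted_list_of_set {v. og v \<noteq> None \<and> v \<noteq> r}"
  from s obtain s1 where s1: "s1 \<in> set_pmf (seq_new \<alpha> p og ?L1 (og, c, Z))"
    and s'1: "s' \<in> set_pmf (seq_old \<beta> p og ?L2 s1)"
    using s' unfolding dstep_def by auto
  have J0: "J p og c (og, c, Z)" unfolding J_def using inv' by auto
  have J1: "J p og c s1"
  proof (rule seq_new_inv[where P="J p og c", OF _ J0 s1])
    fix v s0 s0'
    assume v: "v \<in> set ?L1" and J: "J p og c s0" and s0': "s0' \<in> set_pmf (new_node \<alpha> p og v s0)"
    have v': "og v = None" "og (p v) \<noteq> None" using v set_sorted_sub by blast+
    obtain og' c' Z' where s0: "s0 = (og', c', Z')" by (cases s0) auto
    from s0' have "(\<exists>z. s0' = (og'(v := Some c'), Suc c', Z'(c' := z))) \<or> s0' = (og'(v := og (p v)), c', Z')"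
      unfolding s0 new_node_def by (auto split: if_splits)
    then show "J p og c s0'"
    proof
      assume "\<exists>z. s0' = (og'(v := Some c'), Suc c', Z'(c' := z))"
      then obtain z where e: "s0' = (og'(v := Some c'), Suc c', Z'(c' := z))" by blast
      show ?thesis using J v' unfolding e J_def s0 by (auto simp: less_SucI)
    next
      assume e: "s0' = (og'(v := og (p v)), c', Z')"
      have "\<forall>a. og (p v) = Some a \<longrightarrow> a < c'" using inv' J unfolding s0 J_def by fastforce
      then show ?thesis using J v' unfolding e J_def s0 by auto
    qed
  qed
  show ?thesis
  proof -
    have J2: "J p og c s'"
    proof (rule seq_old_inv[where P="J p og c", OF _ J1 s'1])
      fix v s0 s0'
      assume v: "v \<in> set ?L2" and J: "J p og c s0" and s0': "s0' \<in> set_pmf (old_node \<beta> p og v s0)"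
      have v': "og v \<noteq> None" "v \<noteq> r" using v set_sorted_sub by blast+
      then have v'': "og (p v) \<noteq> None" using inv' by blast
      obtain og' c' Z' where s0: "s0 = (og', c', Z')" by (cases s0) auto
      from s0' have "s0' = (og'(v := og (p v)), c', Z') \<or> s0' = (og', c', Z')"
        unfolding s0 old_node_def by (auto split: if_splits)
      moreover have "\<forall>a. og (p v) = Some a \<longrightarrow> a < c'" using inv' J unfolding s0 J_def by fastforce
      ultimately show "J p og c s0'"
      proof (elim disjE)
        assume "\<forall>a. og (p v) = Some a \<longrightarrow> a < c'" and e: "s0' = (og'(v := og (p v)), c', Z')"
        note JJ = J[unfolded J_def s0 fst_conv snd_conv]
        have j1: "c \<le> c'" using JJ by (elim conjE)
        have j2a: "\<forall>x a. og' x = Some a \<longrightarrow> a < c'" using JJ by (elim conjE)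
        have j3a: "\<forall>x. og x \<noteq> None \<longrightarrow> og' x \<noteq> None" using JJ by (elim conjE)
        have j4a: "\<forall>x. og' x \<noteq> None \<longrightarrow> og x \<noteq> None \<or> og (p x) \<noteq> None" using JJ by (elim conjE)
        note j2 = j2a[rule_format] and j3 = j3a[rule_format] and j4 = j4a[rule_format]
        have pv: "\<And>a. og (p v) = Some a \<Longrightarrow> a < c'" using \<open>\<forall>a. og (p v) = Some a \<longrightarrow> a < c'\<close> by blast
        show ?thesis unfolding J_def e fst_conv snd_conv
        proof (intro conjI allI impI)
          show "c \<le> c'" using j1 .
        next
          fix x a assume "(og'(v := og (p v))) x = Some a"
          then show "a < c'" using j2 pv by (metis fun_upd_other fun_upd_same)
        next
          fix x assume "og x \<noteq> None"
          then show "(og'(v := og (p v))) x \<noteq> None" using j3 v'' by (metis fun_upd_other fun_upd_same)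
        next
          fix x assume "(og'(v := og (p v))) x \<noteq> None"
          then show "og x \<noteq> None \<or> og (p x) \<noteq> None" using j4 v' by (metis fun_upd_other fun_upd_same)
        qed
      next
        assume e: "s0' = (og', c', Z')"
        then show ?thesis using J unfolding J_def s0 e by simp
      qed
    qed
    obtain og'' c'' Z'' where e: "s' = (og'', c'', Z'')" by (cases s') auto
    have k1: "\<forall>x a. og'' x = Some a \<longrightarrow> a < c''" using J2 unfolding J_def e fst_conv snd_conv by (elim conjE)
    have k2: "\<forall>x. og x \<noteq> None \<longrightarrow> og'' x \<noteq> None" using J2 unfolding J_def e fst_conv snd_conv by (elim conjE)
    have k3: "\<forall>x. og'' x \<noteq> None \<longrightarrow> og x \<noteq> None \<or> og (p x) \<noteq> None" using J2 unfolding J_def e fst_conv snd_conv by (elim conjE)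
    have i1: "\<forall>x. og x \<noteq> None \<longrightarrow> gdist E r x \<le> t" using inv unfolding dinv_def s fst_conv snd_conv by (elim conjE)
    have i3: "\<forall>x. og x \<noteq> None \<and> x \<noteq> r \<longrightarrow> og (p x) \<noteq> None" using inv unfolding dinv_def s fst_conv snd_conv by (elim conjE)
    have b1: "\<forall>v. v \<noteq> r \<longrightarrow> gdist E r v = Suc (gdist E r (p v))" using bfs unfolding bfs_parent_def by blast
    show ?thesis unfolding dinv_def e fst_conv snd_conv
    proof (intro conjI allI impI)
      fix x assume x: "og'' x \<noteq> None"
      show "gdist E r x \<le> Suc t"
      proof (cases "x = r")
        case True then show ?thesis by (simp add: gdist_self)
      next
        case False
        have "og x \<noteq> None \<or> og (p x) \<noteq> None" using k3 x by blast
        then show ?thesis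
        proof
          assume "og x \<noteq> None" then have "gdist E r x \<le> t" using i1 by blast
          then show ?thesis by linarith
        next
          assume "og (p x) \<noteq> None" then have "gdist E r (p x) \<le> t" using i1 by blast
          moreover have "gdist E r x = Suc (gdist E r (p x))" using b1 False by blast
          ultimately show ?thesis by linarith
        qed
      qed
    next
      fix x a assume "og'' x = Some a" then show "a < c''" using k1 by blast
    next
      fix x assume x: "og'' x \<noteq> None \<and> x \<noteq> r"
      have "og x \<noteq> None \<or> og (p x) \<noteq> None" using k3 x by blast
      then have "og (p x) \<noteq> None" using i3 x by blast
      then show "og'' (p x) \<noteq> None" using k2 by blast
    qed
  qed
qed

lemma dinv_dproc:
  assumes bfs: "bfs_parent E r p"
  shows "s \<in> set_pmf (dproc \<alpha> \<beta> p r t) \<Longrightarrow> dinv E r p t s"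
proof (induction t arbitrary: s)
  case 0 then show ?case by (auto simp: dinv_def dinit_def gdist_self split: if_splits)
next
  case (Suc t)
  then obtain s0 where "s0 \<in> set_pmf (dproc \<alpha> \<beta> p r t)" "s \<in> set_pmf (dstep \<alpha> \<beta> p r s0)" by auto
  then show ?case using Suc.IH dinv_step[OF bfs] by blast
qed



lemma finite_reach:
  fixes E :: "'a \<Rightarrow> 'a \<Rightarrow> bool" and r :: 'a
  assumes lf: "\<forall>x. finite {y. E x y}"
  shows "finite {x. (E ^^ n) r x}"
proof (induction n)
  case 0
  have "{x. (E ^^ 0) r x} = {r}" by (auto elim: relpowp_0_E intro: relpowp_0_I)
  then show ?case by simp
next
  case (Suc n)
  have "{x. (E ^^ Suc n) r x} \<subseteq> (\<Union>y\<in>{x. (E ^^ n) r x}. {z. E y z})"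
    by (auto elim: relpowp_Suc_E)
  moreover have "finite (\<Union>y\<in>{x. (E ^^ n) r x}. {z. E y z})" using Suc lf by auto
  ultimately show ?case by (rule finite_subset)
qed

lemma gball_finite:
  assumes "conn_lf_graph E"
  shows "finite (gball E r t)"
proof -
  have lf: "\<forall>x. finite {y. E x y}" and cn: "\<forall>x y. E\<^sup>*\<^sup>* x y"
    using assms unfolding conn_lf_graph_def by auto
  have "gball E r t \<subseteq> (\<Union>n\<in>{..t}. {x. (E ^^ n) r x})"
  proof
    fix x assume x: "x \<in> gball E r t"
    obtain n where "(E ^^ n) r x" using cn rtranclp_imp_relpowp by metis
    then have "(E ^^ gdist E r x) r x" unfolding gdist_def by (rule LeastI)
    then show "x \<in> (\<Union>n\<in>{..t}. {x. (E ^^ n) r x})" using x unfolding gball_def by auto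
  qed
  moreover have "finite (\<Union>n\<in>{..t}. {x. (E ^^ n) r x})" using finite_reach[OF lf] by auto
  ultimately show ?thesis by (rule finite_subset)
qed

lemma gball_ne: "r \<in> gball E r t"
  unfolding gball_def by (simp add: gdist_self)

lemma integral_pair_pmf_fin:
  fixes f :: "_ \<Rightarrow> real"
  assumes fa: "finite (set_pmf A)" and fb: "finite (set_pmf B)"
  shows "(\<integral>z. f z \<partial>pair_pmf A B) = (\<integral>a. (\<integral>b. f (a, b) \<partial>B) \<partial>A)"
proof -
  have "(\<integral>z. f z \<partial>pair_pmf A B) = (\<Sum>z\<in>set_pmf A \<times> set_pmf B. f z * pmf (pair_pmf A B) z)"
    using fa fb by (intro integral_measure_pmf_real) auto
  also have "\<dots> = (\<Sum>a\<in>set_pmf A. \<Sum>b\<in>set_pmf B. f (a, b) * (pmf A a * pmf B b))"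
    by (simp add: sum.cartesian_product split_beta) (intro sum.cong refl, metis pmf_pair prod.collapse)
  also have "\<dots> = (\<Sum>a\<in>set_pmf A. (\<Sum>b\<in>set_pmf B. f (a, b) * pmf B b) * pmf A a)"
    by (simp add: sum_distrib_left sum_distrib_right mult_ac)
  also have "\<dots> = (\<Sum>a\<in>set_pmf A. (\<integral>b. f (a, b) \<partial>B) * pmf A a)"
    using fb by (intro sum.cong refl) (simp add: integral_measure_pmf_real[of "set_pmf B"])
  also have "\<dots> = (\<integral>a. (\<integral>b. f (a, b) \<partial>B) \<partial>A)"
    using fa by (intro integral_measure_pmf_real[symmetric]) auto
  finally show ?thesis .
qed

lemma coalesce_eq:
  assumes "conn_lf_graph E"
  shows "coalesce_prob E r p \<alpha> \<beta> t =
    (\<Sum>u\<in>gball E r t. \<Sum>v\<in>gball E r t.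
       (\<integral>s. of_bool (dorigin s u = dorigin s v) \<partial>dproc \<alpha> \<beta> p r t)) / (real (card (gball E r t)))^2"
proof -
  let ?B = "gball E r t" and ?M = "dproc \<alpha> \<beta> p r t" and ?U = "pmf_of_set (gball E r t)"
  have fB: "finite ?B" using gball_finite[OF assms] .
  have nB: "?B \<noteq> {}" using gball_ne[of r E t] by blast
  have fU: "finite (set_pmf ?U)" using fB nB by simp
  let ?A = "{(s, u, v). dorigin s u = dorigin s v}"
  have "coalesce_prob E r p \<alpha> \<beta> t = (\<integral>z. indicator ?A z \<partial>pair_pmf ?M (pair_pmf ?U ?U))"
    unfolding coalesce_prob_def by simp
  also have "\<dots> = (\<integral>s. (\<integral>w. indicator ?A (s, w) \<partial>pair_pmf ?U ?U) \<partial>?M)"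
    using fU finite_dproc by (intro integral_pair_pmf_fin) auto
  also have "\<dots> = (\<integral>s. (\<Sum>u\<in>?B. \<Sum>v\<in>?B. of_bool (dorigin s u = dorigin s v)) / (real (card ?B))^2 \<partial>?M)"
  proof (intro Bochner_Integration.integral_cong refl)
    fix s
    have "(\<integral>w. indicat_real ?A (s, w) \<partial>pair_pmf ?U ?U) = (\<integral>u. (\<integral>v. indicat_real ?A (s, u, v) \<partial>?U) \<partial>?U)"
      using integral_pair_pmf_fin[OF fU fU, of "\<lambda>w. indicator ?A (s, w)"] by simp
    also have "\<dots> = (\<Sum>u\<in>?B. (\<Sum>v\<in>?B. indicator ?A (s, u, v)) / card ?B) / card ?B"
      using fB nB by (simp add: integral_pmf_of_set sum_divide_distrib[symmetric])
    also have "\<dots> = (\<Sum>u\<in>?B. \<Sum>v\<in>?B. of_bool (dorigin s u = dorigin s v)) / (real (card ?B))^2"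
      unfolding sum_divide_distrib[symmetric] divide_divide_eq_left power2_eq_square
      by (simp add: indicator_def)
    finally show "(\<integral>w. indicator ?A (s, w) \<partial>pair_pmf ?U ?U) = (\<Sum>u\<in>?B. \<Sum>v\<in>?B. of_bool (dorigin s u = dorigin s v)) / (real (card ?B))^2" .
  qed
  also have "\<dots> = (\<Sum>u\<in>?B. \<Sum>v\<in>?B. (\<integral>s. of_bool (dorigin s u = dorigin s v) \<partial>?M)) / (real (card ?B))^2"
  proof -
    have int: "\<And>f. integrable (measure_pmf ?M) (f :: _ \<Rightarrow> real)"
      by (rule integrable_measure_pmf_finite[OF finite_dproc])
    show ?thesis by (simp add: integral_sum int)
  qed
  finally show ?thesis .
qed



definition hz :: "int option \<Rightarrow> real" where
  "hz z = of_bool (z = Some 1) - of_bool (z = Some (-1))"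

lemma hz_neg: "hz (Some (- z)) = - hz (Some z)"
  unfolding hz_def by auto

lemma hz_None[simp]: "hz None = 0" unfolding hz_def by simp

lemma hz_abs: "\<bar>hz z\<bar> \<le> 1" unfolding hz_def by auto

lemma lam_eq:
  assumes conn: "conn_lf_graph E" and bfs: "bfs_parent E r p"
    and s: "s \<in> set_pmf (dproc \<alpha> \<beta> p r t)"
  shows "dlambda E r t s = (\<Sum>x\<in>gball E r t. hz (dg s x)) / card (gball E r t)"
proof -
  let ?B = "gball E r t"
  have fB: "finite ?B" using gball_finite[OF conn] .
  have inv: "dinv E r p t s" using dinv_dproc[OF bfs s] .
  have sub: "\<And>x z. dg s x = Some z \<Longrightarrow> x \<in> ?B"
    using inv unfolding dinv_def dg_def gball_def by auto
  have e1: "{x. dg s x = Some 1} = ?B \<inter> {x. dg s x = Some 1}" using sub by auto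
  have e2: "{x. dg s x = Some (-1)} = ?B \<inter> {x. dg s x = Some (-1)}" using sub by auto
  have "(\<Sum>x\<in>?B. hz (dg s x)) = real (card {x. dg s x = Some 1}) - real (card {x. dg s x = Some (-1)})"
    unfolding hz_def sum_subtractf using fB e1 e2 by simp
  then show ?thesis unfolding dlambda_def by simp
qed

definition mo :: "'a \<Rightarrow> 'a \<Rightarrow> 'a dstate \<Rightarrow> nat" where
  "mo x y s = (case fst s x of Some a \<Rightarrow> (case fst s y of Some b \<Rightarrow> max a b | None \<Rightarrow> 0) | None \<Rightarrow> 0)"

definition FF :: "'a \<Rightarrow> 'a \<Rightarrow> 'a dstate \<Rightarrow> real" where
  "FF x y s = hz (dg s x) * hz (dg s y) * of_bool (fst s x \<noteq> fst s y)"

definition GG :: "'a \<Rightarrow> 'a \<Rightarrow> nat \<Rightarrow> 'a dstate \<Rightarrow> real" where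
  "GG x y k s = FF x y s * of_bool (mo x y s = k)"

lemma FF_mo: "FF x y s * of_bool (mo x y s \<noteq> 0) = FF x y s"
proof (cases "mo x y s = 0")
  case True
  show ?thesis
  proof (cases "fst s x")
    case None then show ?thesis by (simp add: FF_def dg_def)
  next
    case (Some a)
    show ?thesis
    proof (cases "fst s y")
      case None then show ?thesis by (simp add: FF_def dg_def)
    next
      case (Some b)
      then have "a = b" using True \<open>fst s x = Some a\<close> unfolding mo_def by simp
      then show ?thesis using Some \<open>fst s x = Some a\<close> by (simp add: FF_def)
    qed
  qed
qed simp

lemma GG_flip:
  assumes k: "1 \<le> k" and inv: "dinv E r p t s"
  shows "GG x y k (flipk k s) = - GG x y k s"
proof -
  obtain og c Z where s: "s = (og, c, Z)" by (cases s) auto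
  have mo_eq: "mo x y (flipk k s) = mo x y s" unfolding mo_def by (simp only: flipk_fst)
  show ?thesis
  proof (cases "mo x y s = k")
    case False then show ?thesis unfolding GG_def mo_eq by simp
  next
    case True
    obtain a where a: "og x = Some a"
      using True k unfolding mo_def s by (cases "og x") auto
    obtain b where b: "og y = Some b"
      using True k a unfolding mo_def s by (cases "og y") auto
    have kab: "k = max a b" using True a b unfolding mo_def s by simp
    show ?thesis
    proof (cases "a = b")
      case True then show ?thesis unfolding GG_def FF_def s using a b by (simp add: flipk_def)
    next
      case False
      have "a < c" "b < c" using inv a b unfolding dinv_def s by auto
      then have kc: "k < c" using kab by simp
      then have fl: "flipk k s = (og, c, Z(k := - Z k))" unfolding flipk_def s by simp
      have "a = k \<and> b \<noteq> k \<or> b = k \<and> a \<noteq> k" using kab False by linarith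
      then have "FF x y (og, c, Z(k := - Z k)) = - FF x y (og, c, Z)"
        unfolding FF_def dg_def using a b by (auto simp: hz_neg)
      moreover have "GG x y k (flipk k s) = FF x y (flipk k s)" "GG x y k s = FF x y s"
        unfolding GG_def mo_eq using \<open>mo x y s = k\<close> by simp_all
      ultimately show ?thesis using fl unfolding s by simp
    qed
  qed
qed

lemma int_fin: "integrable (measure_pmf (dproc \<alpha> \<beta> p r t)) (f :: _ \<Rightarrow> real)"
  by (rule integrable_measure_pmf_finite[OF finite_dproc])

lemma GG_int:
  assumes k: "1 \<le> k" and bfs: "bfs_parent E r p"
  shows "(\<integral>s. GG x y k s \<partial>dproc \<alpha> \<beta> p r t) = 0"
proof -
  let ?M = "dproc \<alpha> \<beta> p r t"
  have eq: "map_pmf (flipk k) ?M = ?M" by (rule dproc_flip[OF k])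
  have "(\<integral>s. GG x y k (flipk k s) \<partial>?M) = (\<integral>s. GG x y k s \<partial>map_pmf (flipk k) ?M)"
    by simp
  then have "(\<integral>s. GG x y k s \<partial>?M) = (\<integral>s. GG x y k (flipk k s) \<partial>?M)"
    by (simp only: eq)
  also have "\<dots> = (\<integral>s. - GG x y k s \<partial>?M)"
    by (intro integral_cong_AE) (auto simp: AE_measure_pmf_iff GG_flip[OF k dinv_dproc[OF bfs]])
  also have "\<dots> = - (\<integral>s. GG x y k s \<partial>?M)" by simp
  finally show ?thesis by simp
qed

lemma FF_int:
  assumes bfs: "bfs_parent E r p"
  shows "(\<integral>s. FF x y s \<partial>dproc \<alpha> \<beta> p r t) = 0"
proof -
  let ?M = "dproc \<alpha> \<beta> p r t"
  define K where "K = Max (mo x y ` set_pmf ?M)"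
  have fin: "finite (mo x y ` set_pmf ?M)" using finite_dproc[of \<alpha> \<beta> p r t] by simp
  have "(\<integral>s. FF x y s \<partial>?M) = (\<integral>s. (\<Sum>k\<in>{1..K}. GG x y k s) \<partial>?M)"
  proof (intro integral_cong_AE)
    show "AE s in measure_pmf ?M. FF x y s = (\<Sum>k\<in>{1..K}. GG x y k s)"
      unfolding AE_measure_pmf_iff
    proof
      fix s assume s: "s \<in> set_pmf ?M"
      have le: "mo x y s \<le> K" unfolding K_def using fin s by simp
      have "(\<Sum>k\<in>{1..K}. GG x y k s) = FF x y s * (\<Sum>k\<in>{1..K}. of_bool (mo x y s = k))"
        unfolding GG_def by (simp add: sum_distrib_left)
      also have "(\<Sum>k\<in>{1..K}. of_bool (mo x y s = k) :: real) = of_bool (mo x y s \<noteq> 0)"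
      proof -
        have "{1..K} \<inter> {k. mo x y s = k} = (if mo x y s = 0 then {} else {mo x y s})"
          using le by auto
        then show ?thesis by simp
      qed
      finally show "FF x y s = (\<Sum>k\<in>{1..K}. GG x y k s)" using FF_mo by simp
    qed
  qed auto
  also have "\<dots> = (\<Sum>k\<in>{1..K}. (\<integral>s. GG x y k s \<partial>?M))"
    by (simp add: integral_sum int_fin)
  also have "\<dots> = 0" using GG_int[OF _ bfs] by simp
  finally show ?thesis .
qed

lemma prod_int_le:
  assumes bfs: "bfs_parent E r p"
  shows "(\<integral>s. hz (dg s x) * hz (dg s y) \<partial>dproc \<alpha> \<beta> p r t)
       \<le> (\<integral>s. of_bool (dorigin s x = dorigin s y) \<partial>dproc \<alpha> \<beta> p r t)"
proof -
  let ?M = "dproc \<alpha> \<beta> p r t"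
  have "(\<integral>s. hz (dg s x) * hz (dg s y) \<partial>?M)
      = (\<integral>s. hz (dg s x) * hz (dg s y) * of_bool (dorigin s x = dorigin s y) + FF x y s \<partial>?M)"
    by (intro Bochner_Integration.integral_cong refl) (auto simp: FF_def dorigin_def)
  also have "\<dots> = (\<integral>s. hz (dg s x) * hz (dg s y) * of_bool (dorigin s x = dorigin s y) \<partial>?M)"
    by (simp add: int_fin FF_int[OF bfs])
  also have "\<dots> \<le> (\<integral>s. of_bool (dorigin s x = dorigin s y) \<partial>?M)"
  proof (intro integral_mono int_fin)
    fix s
    have "hz (dg s x) * hz (dg s y) \<le> 1"
    proof -
      have "\<bar>hz (dg s x) * hz (dg s y)\<bar> \<le> 1 * 1"
        unfolding abs_mult by (intro mult_mono hz_abs) auto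
      then show ?thesis by simp
    qed
    then show "hz (dg s x) * hz (dg s y) * of_bool (dorigin s x = dorigin s y)
        \<le> of_bool (dorigin s x = dorigin s y)" by auto
  qed
  finally show ?thesis .
qed



lemma second_moment:
  assumes conn: "conn_lf_graph E" and bfs: "bfs_parent E r p"
  shows "(\<integral>s. (dlambda E r t s)\<^sup>2 \<partial>dproc \<alpha> \<beta> p r t) \<le> coalesce_prob E r p \<alpha> \<beta> t"
proof -
  let ?M = "dproc \<alpha> \<beta> p r t" and ?B = "gball E r t"
  let ?N = "(real (card ?B))\<^sup>2"
  have "(\<integral>s. (dlambda E r t s)\<^sup>2 \<partial>?M)
      = (\<integral>s. (\<Sum>u\<in>?B. \<Sum>v\<in>?B. hz (dg s u) * hz (dg s v)) / ?N \<partial>?M)"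
  proof (intro integral_cong_AE)
    show "AE s in measure_pmf ?M. (dlambda E r t s)\<^sup>2 = (\<Sum>u\<in>?B. \<Sum>v\<in>?B. hz (dg s u) * hz (dg s v)) / ?N"
      unfolding AE_measure_pmf_iff
    proof
      fix s assume s: "s \<in> set_pmf ?M"
      show "(dlambda E r t s)\<^sup>2 = (\<Sum>u\<in>?B. \<Sum>v\<in>?B. hz (dg s u) * hz (dg s v)) / ?N"
        unfolding lam_eq[OF conn bfs s] power_divide
        by (simp add: power2_eq_square sum_product)
    qed
  qed auto
  also have "\<dots> = (\<Sum>u\<in>?B. \<Sum>v\<in>?B. (\<integral>s. hz (dg s u) * hz (dg s v) \<partial>?M)) / ?N"
    by (simp add: integral_sum int_fin)
  also have "\<dots> \<le> (\<Sum>u\<in>?B. \<Sum>v\<in>?B. (\<integral>s. of_bool (dorigin s u = dorigin s v) \<partial>?M)) / ?N"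
    by (intro divide_right_mono sum_mono prod_int_le[OF bfs]) auto
  also have "\<dots> = coalesce_prob E r p \<alpha> \<beta> t" using coalesce_eq[OF conn] by simp
  finally show ?thesis .
qed

lemma cheb:
  assumes conn: "conn_lf_graph E" and bfs: "bfs_parent E r p" and eta: "\<eta> > 0"
  shows "measure_pmf.prob (dproc \<alpha> \<beta> p r t)
     {s. \<bar>dlambda E r t s - measure_pmf.expectation (dproc \<alpha> \<beta> p r t) (dlambda E r t)\<bar> > \<eta>}
     \<le> coalesce_prob E r p \<alpha> \<beta> t / \<eta>\<^sup>2"
proof -
  let ?M = "dproc \<alpha> \<beta> p r t" and ?X = "dlambda E r t"
  have "measure_pmf.prob ?M {s. \<bar>?X s - measure_pmf.expectation ?M ?X\<bar> > \<eta>}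
      \<le> measure_pmf.prob ?M {s \<in> space (measure_pmf ?M). \<bar>?X s - measure_pmf.expectation ?M ?X\<bar> \<ge> \<eta>}"
    by (intro measure_pmf.finite_measure_mono) auto
  also have "\<dots> \<le> measure_pmf.variance ?M ?X / \<eta>\<^sup>2"
    by (intro measure_pmf.Chebyshev_inequality eta int_fin) simp
  also have "measure_pmf.variance ?M ?X = (\<integral>s. (?X s)\<^sup>2 \<partial>?M) - (measure_pmf.expectation ?M ?X)\<^sup>2"
    by (intro measure_pmf.variance_eq int_fin)
  also have "\<dots> \<le> coalesce_prob E r p \<alpha> \<beta> t"
    using second_moment[OF conn bfs, where t=t and \<alpha>=\<alpha> and \<beta>=\<beta>] by (smt (verit) zero_le_power2)
  finally show ?thesis using eta by (simp add: divide_right_mono)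
qed



theorem mainTheorem14:
  fixes E :: "'a::linorder \<Rightarrow> 'a \<Rightarrow> bool" and r :: 'a and p :: "'a \<Rightarrow> 'a"
    and \<alpha> \<beta> :: real
  assumes "conn_lf_graph E" and "bfs_parent E r p"
    and "0 < \<alpha>" "\<alpha> < 1" "0 < \<beta>" "\<beta> < 1"
  shows "((\<lambda>t. coalesce_prob E r p \<alpha> \<beta> t) \<longlonglongrightarrow> 0 \<longrightarrow>
           (\<forall>\<eta>>0. \<exists>t0. \<forall>t\<ge>t0.
              measure_pmf.prob (dproc \<alpha> \<beta> p r t)
                {s. \<bar>dlambda E r t s - measure_pmf.expectation (dproc \<alpha> \<beta> p r t) (dlambda E r t)\<bar> > \<eta>}
              < \<eta>))
       \<and> ((\<exists>c1 c2. c1 > 0 \<and> c2 > 0 \<and>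
             (\<forall>t. coalesce_prob E r p \<alpha> \<beta> t \<le> exp (- c1 * real t powr c2))) \<longrightarrow>
          (\<exists>c3 c4 c5 c6. c3 > 0 \<and> c4 > 0 \<and> c5 > 0 \<and> c6 > 0 \<and>
             (\<forall>\<^sub>F t in sequentially.
                measure_pmf.prob (dproc \<alpha> \<beta> p r t)
                  {s. \<bar>dlambda E r t s - measure_pmf.expectation (dproc \<alpha> \<beta> p r t) (dlambda E r t)\<bar>
                      > exp (- c3 * real t powr c4)}
                \<le> exp (- c5 * real t powr c6))))"
proof (intro conjI impI)
  note ch = cheb[OF assms(1,2)]
  assume lim: "(\<lambda>t. coalesce_prob E r p \<alpha> \<beta> t) \<longlonglongrightarrow> 0"
  show "\<forall>\<eta>>0. \<exists>t0. \<forall>t\<ge>t0.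
              measure_pmf.prob (dproc \<alpha> \<beta> p r t)
                {s. \<bar>dlambda E r t s - measure_pmf.expectation (dproc \<alpha> \<beta> p r t) (dlambda E r t)\<bar> > \<eta>}
              < \<eta>"
  proof (intro allI impI)
    fix \<eta> :: real assume eta: "\<eta> > 0"
    have "eventually (\<lambda>t. coalesce_prob E r p \<alpha> \<beta> t < \<eta>^3) sequentially"
      using lim eta by (intro order_tendstoD(2)) auto
    then obtain t0 where t0: "\<And>t. t \<ge> t0 \<Longrightarrow> coalesce_prob E r p \<alpha> \<beta> t < \<eta>^3"
      by (auto simp: eventually_sequentially)
    show "\<exists>t0. \<forall>t\<ge>t0.
              measure_pmf.prob (dproc \<alpha> \<beta> p r t)
                {s. \<bar>dlambda E r t s - measure_pmf.expectation (dproc \<alpha> \<beta> p r t) (dlambda E r t)\<bar> > \<eta>}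
              < \<eta>"
    proof (intro exI allI impI)
      fix t assume t: "t \<ge> t0"
      have "coalesce_prob E r p \<alpha> \<beta> t / \<eta>\<^sup>2 < \<eta>^3 / \<eta>\<^sup>2"
        using t0[OF t] eta by (simp add: divide_strict_right_mono)
      also have "\<eta>^3 / \<eta>\<^sup>2 = \<eta>" using eta by (simp add: power2_eq_square power3_eq_cube)
      finally show "measure_pmf.prob (dproc \<alpha> \<beta> p r t)
                {s. \<bar>dlambda E r t s - measure_pmf.expectation (dproc \<alpha> \<beta> p r t) (dlambda E r t)\<bar> > \<eta>}
              < \<eta>" using ch[OF eta, of \<alpha> \<beta> t] by linarith
    qed
  qed
next
  note ch = cheb[OF assms(1,2)]
  assume "\<exists>c1 c2. c1 > 0 \<and> c2 > 0 \<and> (\<forall>t. coalesce_prob E r p \<alpha> \<beta> t \<le> exp (- c1 * real t powr c2))"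
  then obtain c1 c2 where c1: "c1 > 0" and c2: "c2 > 0"
    and hyp: "\<And>t. coalesce_prob E r p \<alpha> \<beta> t \<le> exp (- c1 * real t powr c2)" by blast
  show "\<exists>c3 c4 c5 c6. c3 > 0 \<and> c4 > 0 \<and> c5 > 0 \<and> c6 > 0 \<and>
             (\<forall>\<^sub>F t in sequentially.
                measure_pmf.prob (dproc \<alpha> \<beta> p r t)
                  {s. \<bar>dlambda E r t s - measure_pmf.expectation (dproc \<alpha> \<beta> p r t) (dlambda E r t)\<bar>
                      > exp (- c3 * real t powr c4)}
                \<le> exp (- c5 * real t powr c6))"
  proof (intro exI conjI always_eventually allI)
    show "c1 / 4 > 0" "c2 > 0" "c1 / 2 > 0" "c2 > 0" using c1 c2 by auto
    fix t :: nat
    define q where "q = real t powr c2"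
    have e2: "(exp (- (c1 / 4) * q))\<^sup>2 = exp (- (c1 / 2) * q)"
      by (simp add: power2_eq_square exp_add[symmetric])
    have "measure_pmf.prob (dproc \<alpha> \<beta> p r t)
                  {s. \<bar>dlambda E r t s - measure_pmf.expectation (dproc \<alpha> \<beta> p r t) (dlambda E r t)\<bar>
                      > exp (- (c1/4) * q)}
          \<le> coalesce_prob E r p \<alpha> \<beta> t / (exp (- (c1 / 4) * q))\<^sup>2"
      by (rule ch) simp
    also have "\<dots> \<le> exp (- c1 * q) / exp (- (c1 / 2) * q)"
      unfolding e2 using hyp[of t] unfolding q_def by (simp add: divide_right_mono)
    also have "\<dots> = exp (- (c1 / 2) * q)"
      by (simp add: exp_diff[symmetric])
    finally show "measure_pmf.prob (dproc \<alpha> \<beta> p r t)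
                  {s. \<bar>dlambda E r t s - measure_pmf.expectation (dproc \<alpha> \<beta> p r t) (dlambda E r t)\<bar>
                      > exp (- (c1/4) * real t powr c2)}
                \<le> exp (- (c1/2) * real t powr c2)" unfolding q_def .
  qed
qed

end
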